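(* Assume the setting and the CRAIG recurrence described in the context, and let $k\ge 1$ be an index for which $u^{(k)},p^{(k)}$ are defined. Then $p^{(k)}$ coincides with the $k$-th iterate of the conjugate gradient method, started from the zero initial guess and preconditioned with $N$, applied to the Schur-complement equation $Sp=-b$, where $S=A^TM^{-1}A+C$. That is, $p^{(k)}$ is the unique vector $p\in\mathcal{K}_k:=\operatorname{span}\{N^{-1}b,(N^{-1}S)N^{-1}b,\dots,(N^{-1}S)^{k-1}N^{-1}b\}$ such that $(-b-Sp)^Tx=0$ for all $x\in\mathcal{K}_k$ (equivalently, $p^{(k)}$ minimizes $\|p_*-p\|_S=((p_*-p)^TS(p_*-p))^{1/2}$ over $p\in\mathcal{K}_k$, where $p_*$ solves $Sp_*=-b$). Moreover, $u^{(k)}=-M^{-1}Ap^{(k)}$.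
   Context: Setting: $M\in\mathbb{R}^{m\times m}$ is symmetric positive definite, $A\in\mathbb{R}^{m\times n}$ ($n\le m$) has full column rank, $C\in\mathbb{R}^{n\times n}$ is symmetric positive semidefinite, $b\in\mathbb{R}^n$ is nonzero, and $N\in\mathbb{R}^{n\times n}$ is symmetric positive definite (the preconditioner). For a symmetric positive definite $G$ write $\|x\|_G=(x^TGx)^{1/2}$. The generalized saddle point system is $Mu+Ap=0$, $A^Tu-Cp=b$, with unique solution $(u_*,p_* )$; $S=A^TM^{-1}A+C$. CRAIG recurrence (exact arithmetic): Initialization: $\beta_1=\|b\|_{N^{-1}}$, $q_1=N^{-1}b/\beta_1$, $r_1=q_1$, $w_1=M^{-1}Aq_1$, $s_1=Cr_1$, $\alpha_1=(w_1^TMw_1+r_1^Ts_1)^{1/2}$, $v_1=w_1/\alpha_1$, $t_1=s_1/\alpha_1$, $\zeta_1=\beta_1/\alpha_1$, $u^{(1)}=\zeta_1v_1$, $p^{(1)}=-(\zeta_1/\alpha_1)r_1$. For $k=1,2,\dots$: $g_k=N^{-1}(A^Tv_k+t_k)-\alpha_kq_k$, $\beta_{k+1}=\|g_k\|_N$; if $\beta_{k+1}=0$ the recurrence stops; otherwise $q_{k+1}=g_k/\beta_{k+1}$, $w_{k+1}=M^{-1}Aq_{k+1}-\beta_{k+1}v_k$, $r_{k+1}=q_{k+1}-(\beta_{k+1}/\alpha_k)r_k$, $s_{k+1}=Cr_{k+1}$, $\alpha_{k+1}=(w_{k+1}^TMw_{k+1}+r_{k+1}^Ts_{k+1})^{1/2}$,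 $v_{k+1}=w_{k+1}/\alpha_{k+1}$, $t_{k+1}=s_{k+1}/\alpha_{k+1}$, $\zeta_{k+1}=-(\beta_{k+1}/\alpha_{k+1})\zeta_k$, $u^{(k+1)}=u^{(k)}+\zeta_{k+1}v_{k+1}$, $p^{(k+1)}=p^{(k)}-(\zeta_{k+1}/\alpha_{k+1})r_{k+1}$. *)

theory Defs
  imports "HOL-Analysis.Analysis"
begin

definition Gnorm :: "real^'a^'a \<Rightarrow> real^'a \<Rightarrow> real" where
  "Gnorm G x = sqrt (x \<bullet> (G *v x))"

definition sym_pos_def_mat :: "real^'a^'a \<Rightarrow> bool" where
  "sym_pos_def_mat G \<longleftrightarrow> transpose G = G \<and> (\<forall>x. x \<noteq> 0 \<longrightarrow> x \<bullet> (G *v x) > 0)"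

definition sym_pos_semidef_mat :: "real^'a^'a \<Rightarrow> bool" where
  "sym_pos_semidef_mat G \<longleftrightarrow> transpose G = G \<and> (\<forall>x. x \<bullet> (G *v x) \<ge> 0)"

record ('m,'n) craig_state =
  cq :: "real^'n"
  cr :: "real^'n"
  cv :: "real^'m"
  ct :: "real^'n"
  calpha :: real
  czeta :: real
  cu :: "real^'m"
  cp :: "real^'n"

definition craig_init ::
  "real^'m^'m \<Rightarrow> real^'n^'m \<Rightarrow> real^'n^'n \<Rightarrow> real^'n^'n \<Rightarrow> real^'n \<Rightarrow> ('m,'n) craig_state" where
  "craig_init M A C N b =
    (let beta1 = Gnorm (matrix_inv N) b;
         q1 = (1 / beta1) *\<^sub>R (matrix_inv N *v b);
         r1 = q1;
         w1 = matrix_inv M *v (A *v q1);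
         s1 = C *v r1;
         alpha1 = sqrt (w1 \<bullet> (M *v w1) + r1 \<bullet> s1);
         v1 = (1 / alpha1) *\<^sub>R w1;
         t1 = (1 / alpha1) *\<^sub>R s1;
         zeta1 = beta1 / alpha1
     in \<lparr> cq = q1, cr = r1, cv = v1, ct = t1, calpha = alpha1, czeta = zeta1,
          cu = zeta1 *\<^sub>R v1, cp = - ((zeta1 / alpha1) *\<^sub>R r1) \<rparr>)"

text \<open>g_k and beta_{k+1} computed from the state at index k.\<close>
definition craig_g ::
  "real^'n^'m \<Rightarrow> real^'n^'n \<Rightarrow> ('m,'n) craig_state \<Rightarrow> real^'n" where
  "craig_g A N st = matrix_inv N *v (transpose A *v cv st + ct st) - calpha st *\<^sub>R cq st"

definition craig_beta_next ::
  "real^'n^'m \<Rightarrow> real^'n^'n \<Rightarrow> ('m,'n) craig_state \<Rightarrow> real" where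
  "craig_beta_next A N st = Gnorm N (craig_g A N st)"

definition craig_step ::
  "real^'m^'m \<Rightarrow> real^'n^'m \<Rightarrow> real^'n^'n \<Rightarrow> real^'n^'n \<Rightarrow> ('m,'n) craig_state \<Rightarrow> ('m,'n) craig_state" where
  "craig_step M A C N st =
    (let beta = craig_beta_next A N st;
         q' = (1 / beta) *\<^sub>R craig_g A N st;
         w' = matrix_inv M *v (A *v q') - beta *\<^sub>R cv st;
         r' = q' - (beta / calpha st) *\<^sub>R cr st;
         s' = C *v r';
         alpha' = sqrt (w' \<bullet> (M *v w') + r' \<bullet> s');
         v' = (1 / alpha') *\<^sub>R w';
         t' = (1 / alpha') *\<^sub>R s';
         zeta' = - (beta / alpha') * czeta st
     in \<lparr> cq = q', cr = r', cv = v', ct = t', calpha = alpha', czeta = zeta',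
          cu = cu st + zeta' *\<^sub>R v', cp = cp st - (zeta' / alpha') *\<^sub>R r' \<rparr>)"

text \<open>craig M A C N b i is the state with paper index k = i + 1.\<close>
fun craig ::
  "real^'m^'m \<Rightarrow> real^'n^'m \<Rightarrow> real^'n^'n \<Rightarrow> real^'n^'n \<Rightarrow> real^'n \<Rightarrow> nat \<Rightarrow> ('m,'n) craig_state" where
  "craig M A C N b 0 = craig_init M A C N b"
| "craig M A C N b (Suc i) = craig_step M A C N (craig M A C N b i)"

definition craig_u where "craig_u M A C N b k = cu (craig M A C N b (k - 1))"
definition craig_p where "craig_p M A C N b k = cp (craig M A C N b (k - 1))"

text \<open>u^(k), p^(k) are defined iff beta_2, ..., beta_k are all nonzero.\<close>
definition craig_defined where
  "craig_defined M A C N b k \<longleftrightarrow> 1 \<le> k \<and>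
     (\<forall>i. i + 1 < k \<longrightarrow> craig_beta_next A N (craig M A C N b i) \<noteq> 0)"

definition schur :: "real^'m^'m \<Rightarrow> real^'n^'m \<Rightarrow> real^'n^'n \<Rightarrow> real^'n^'n" where
  "schur M A C = transpose A ** matrix_inv M ** A + C"

definition krylov :: "real^'n^'n \<Rightarrow> real^'n^'n \<Rightarrow> real^'n \<Rightarrow> nat \<Rightarrow> (real^'n) set" where
  "krylov S N b k = span {((\<lambda>x. matrix_inv N *v (S *v x)) ^^ j) (matrix_inv N *v b) | j. j < k}"

end

theory Submission
  imports Defs
begin

lemma dot_transpose: "x \<bullet> (transpose A *v z) = (A *v x) \<bullet> (z::real^'m)"
  by (metis dot_lmul_matrix inner_commute transpose_matrix_vector)

lemma sym_dot: "transpose G = G \<Longrightarrow> x \<bullet> (G *v y) = (G *v x) \<bullet> (y::real^'n)"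
  by (metis dot_transpose inner_commute)

lemma pd_inj: "sym_pos_def_mat G \<Longrightarrow> G *v x = 0 \<Longrightarrow> x = 0"
  unfolding sym_pos_def_mat_def by force

lemma pd_inv:
  fixes G :: "real^'n^'n"
  assumes "sym_pos_def_mat G"
  shows "G ** matrix_inv G = mat 1 \<and> matrix_inv G ** G = mat 1"
proof -
  have "invertible G"
    using pd_inj[OF assms] by (simp add: invertible_left_inverse matrix_left_invertible_ker)
  then have "\<exists>G'. G ** G' = mat 1 \<and> G' ** G = mat 1" by (simp add: invertible_def)
  then show ?thesis unfolding matrix_inv_def by (rule someI_ex)
qed

lemma pd_inv_vec:
  fixes G :: "real^'n^'n"
  assumes "sym_pos_def_mat G"
  shows "G *v (matrix_inv G *v x) = x" "matrix_inv G *v (G *v x) = x"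
  using pd_inv[OF assms] by (simp_all add: matrix_vector_mul_assoc)

lemma pd_sym: "sym_pos_def_mat G \<Longrightarrow> x \<bullet> (G *v y) = (G *v x) \<bullet> y"
  unfolding sym_pos_def_mat_def using sym_dot by blast

lemma pd_inv_sym:
  fixes G :: "real^'n^'n"
  assumes "sym_pos_def_mat G"
  shows "x \<bullet> (matrix_inv G *v y) = (matrix_inv G *v x) \<bullet> y"
proof -
  have "(matrix_inv G *v x) \<bullet> y = (matrix_inv G *v x) \<bullet> (G *v (matrix_inv G *v y))"
    by (simp add: pd_inv_vec[OF assms])
  also have "\<dots> = x \<bullet> (matrix_inv G *v y)"
    using pd_sym[OF assms, of "matrix_inv G *v x" "matrix_inv G *v y"] by (simp add: pd_inv_vec[OF assms])
  finally show ?thesis by simp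
qed

lemma pd_inv_pd:
  fixes G :: "real^'n^'n"
  assumes "sym_pos_def_mat G" "x \<noteq> 0"
  shows "x \<bullet> (matrix_inv G *v x) > 0"
proof -
  let ?z = "matrix_inv G *v x"
  have "?z \<noteq> 0" using assms pd_inv_vec(1)[OF assms(1), of x] by auto
  then have "?z \<bullet> (G *v ?z) > 0" using assms(1) unfolding sym_pos_def_mat_def by blast
  then show ?thesis by (simp add: pd_inv_vec[OF assms(1)] inner_commute)
qed

lemma schur_vec: "schur M A C *v x = transpose A *v (matrix_inv M *v (A *v x)) + C *v x"
  unfolding schur_def by (simp add: matrix_vector_mult_add_rdistrib matrix_vector_mul_assoc matrix_mul_assoc)

lemma schur_dot:
  fixes M :: "real^'m^'m" and A :: "real^'n^'m"
  shows "x \<bullet> (schur M A C *v y) = (A *v x) \<bullet> (matrix_inv M *v (A *v y)) + x \<bullet> (C *v y)"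
  by (simp add: schur_vec inner_add_right dot_transpose del: transpose_matrix_vector)

lemma schur_sym:
  fixes M :: "real^'m^'m" and A :: "real^'n^'m"
  assumes "sym_pos_def_mat M" "sym_pos_semidef_mat C"
  shows "x \<bullet> (schur M A C *v y) = (schur M A C *v x) \<bullet> y"
proof -
  have "transpose C = C" using assms(2) by (simp add: sym_pos_semidef_mat_def)
  then show ?thesis
    by (metis schur_dot pd_inv_sym[OF assms(1)] sym_dot inner_commute)
qed

lemma schur_pd:
  fixes M :: "real^'m^'m" and A :: "real^'n^'m"
  assumes "sym_pos_def_mat M" "sym_pos_semidef_mat C" "inj ((*v) A)" "x \<noteq> 0"
  shows "x \<bullet> (schur M A C *v x) > 0"
proof -
  have "A *v x \<noteq> 0" using assms(3,4)
    by (metis injD matrix_vector_mult_0_right)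
  then have "(A *v x) \<bullet> (matrix_inv M *v (A *v x)) > 0" by (rule pd_inv_pd[OF assms(1)])
  moreover have "x \<bullet> (C *v x) \<ge> 0" using assms(2) by (simp add: sym_pos_semidef_mat_def)
  ultimately show ?thesis by (simp add: schur_dot)
qed


context
  fixes M :: "real^'m^'m" and A :: "real^'n^'m" and C N :: "real^'n^'n" and b :: "real^'n" and K :: nat
  assumes Mpd: "sym_pos_def_mat M" and Ainj: "inj ((*v) A)" and Cpsd: "sym_pos_semidef_mat C"
    and bnz: "b \<noteq> 0" and Npd: "sym_pos_def_mat N"
    and bet: "\<And>j. j < K \<Longrightarrow> craig_beta_next A N (craig M A C N b j) \<noteq> 0"
begin

abbreviation "Mi \<equiv> matrix_inv M"
abbreviation "Ni \<equiv> matrix_inv N"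
abbreviation "SS \<equiv> schur M A C"
abbreviation "LL \<equiv> (\<lambda>x. Ni *v (SS *v x))"
abbreviation "qq i \<equiv> cq (craig M A C N b i)"
abbreviation "rr i \<equiv> cr (craig M A C N b i)"
abbreviation "vv i \<equiv> cv (craig M A C N b i)"
abbreviation "tt i \<equiv> ct (craig M A C N b i)"
abbreviation "al i \<equiv> calpha (craig M A C N b i)"
abbreviation "ze i \<equiv> czeta (craig M A C N b i)"
abbreviation "uu i \<equiv> cu (craig M A C N b i)"
abbreviation "pp i \<equiv> cp (craig M A C N b i)"
abbreviation "gg i \<equiv> craig_g A N (craig M A C N b i)"
abbreviation "be i \<equiv> craig_beta_next A N (craig M A C N b i)"
abbreviation "kr k \<equiv> krylov SS N b k"
abbreviation "b1 \<equiv> Gnorm Ni b"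

lemma gg_def: "gg i = Ni *v (transpose A *v vv i + tt i) - al i *\<^sub>R qq i"
  by (simp add: craig_g_def)
lemma be_def: "be i = sqrt (gg i \<bullet> (N *v gg i))"
  by (simp add: craig_beta_next_def Gnorm_def)

lemma st0:
  "qq 0 = (1 / b1) *\<^sub>R (Ni *v b)"
  "rr 0 = qq 0"
  "al 0 = sqrt ((Mi *v (A *v qq 0)) \<bullet> (M *v (Mi *v (A *v qq 0))) + rr 0 \<bullet> (C *v rr 0))"
  "vv 0 = (1 / al 0) *\<^sub>R (Mi *v (A *v qq 0))"
  "tt 0 = (1 / al 0) *\<^sub>R (C *v rr 0)"
  "ze 0 = b1 / al 0"
  "uu 0 = ze 0 *\<^sub>R vv 0"
  "pp 0 = - ((ze 0 / al 0) *\<^sub>R rr 0)"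
  by (simp_all add: craig_init_def Let_def)

declare craig.simps[simp del]

lemma stS:
  "qq (Suc i) = (1 / be i) *\<^sub>R gg i"
  "rr (Suc i) = qq (Suc i) - (be i / al i) *\<^sub>R rr i"
  "al (Suc i) = sqrt ((Mi *v (A *v qq (Suc i)) - be i *\<^sub>R vv i) \<bullet> (M *v (Mi *v (A *v qq (Suc i)) - be i *\<^sub>R vv i)) + rr (Suc i) \<bullet> (C *v rr (Suc i)))"
  "vv (Suc i) = (1 / al (Suc i)) *\<^sub>R (Mi *v (A *v qq (Suc i)) - be i *\<^sub>R vv i)"
  "tt (Suc i) = (1 / al (Suc i)) *\<^sub>R (C *v rr (Suc i))"
  "ze (Suc i) = - (be i / al (Suc i)) * ze i"
  "uu (Suc i) = uu i + ze (Suc i) *\<^sub>R vv (Suc i)"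
  "pp (Suc i) = pp i - (ze (Suc i) / al (Suc i)) *\<^sub>R rr (Suc i)"
  by (simp_all add: craig.simps craig_step_def Let_def del: transpose_matrix_vector)

lemma mv_neg: "(G::real^'a^'b) *v (- x) = - (G *v x)"
  by (metis diff_0 matrix_vector_mult_diff_distrib matrix_vector_mult_0_right)

lemmas mvs = matrix_vector_right_distrib matrix_vector_mult_diff_distrib matrix_vector_mult_scaleR mv_neg
lemmas ins = inner_add_left inner_add_right inner_diff_left inner_diff_right inner_scaleR_left inner_scaleR_right inner_minus_left inner_minus_right

lemma NNi: "Ni *v (N *v x) = x" "N *v (Ni *v x) = x"
  using pd_inv_vec[OF Npd] by auto
lemma MMi: "Mi *v (M *v x) = x" "M *v (Mi *v x) = x"
  using pd_inv_vec[OF Mpd] by auto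

lemma Ncomm: "x \<bullet> (N *v y) = y \<bullet> (N *v x)"
  using pd_sym[OF Npd] by (metis inner_commute)

lemma Scomm: "x \<bullet> (SS *v y) = y \<bullet> (SS *v x)"
  using schur_sym[OF Mpd Cpsd] by (metis inner_commute)

lemma LN: "(LL x) \<bullet> (N *v y) = x \<bullet> (SS *v y)"
proof -
  have "(LL x) \<bullet> (N *v y) = y \<bullet> (N *v LL x)" by (rule Ncomm)
  also have "\<dots> = y \<bullet> (SS *v x)" by (simp add: NNi)
  finally show ?thesis by (simp add: Scomm)
qed

lemma alpha_eq: "(Mi *v (A *v r)) \<bullet> (M *v (Mi *v (A *v r))) + r \<bullet> (C *v r) = r \<bullet> (SS *v r)"
  by (simp add: MMi schur_dot inner_commute)

lemma gL:
  assumes "al i \<noteq> 0" "vv i = (1 / al i) *\<^sub>R (Mi *v (A *v rr i))" "tt i = (1 / al i) *\<^sub>R (C *v rr i)"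
  shows "LL (rr i) = al i *\<^sub>R (gg i + al i *\<^sub>R qq i)"
proof -
  have "transpose A *v vv i + tt i = (1 / al i) *\<^sub>R (SS *v rr i)"
    unfolding assms(2,3) schur_vec by (simp only: mvs scaleR_right_distrib)
  then have "gg i + al i *\<^sub>R qq i = (1 / al i) *\<^sub>R LL (rr i)"
    unfolding gg_def by (simp add: mvs)
  then show ?thesis using assms(1) by simp
qed

lemma b1pos: "b1 > 0"
  using pd_inv_pd[OF Npd bnz] by (simp add: Gnorm_def)

lemma LL_lin: "linear LL"
proof -
  have "LL = (\<lambda>x. (Ni ** SS) *v x)" by (simp add: matrix_vector_mul_assoc)
  then show ?thesis by (simp add: matrix_vector_mul_linear)
qed

lemma kr_gen: "j < k \<Longrightarrow> (LL ^^ j) (Ni *v b) \<in> kr k"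
  unfolding krylov_def by (rule span_base) blast

lemma kr_mono: "k \<le> k' \<Longrightarrow> kr k \<subseteq> kr k'"
  unfolding krylov_def by (rule span_mono) auto

lemma kr_L:
  assumes "x \<in> kr k" shows "LL x \<in> kr (Suc k)"
proof -
  let ?G = "\<lambda>k. {(LL ^^ j) (Ni *v b) | j. j < k}"
  have "LL x \<in> LL ` span (?G k)" using assms unfolding krylov_def by blast
  also have "\<dots> = span (LL ` ?G k)" by (simp add: span_linear_image[OF LL_lin])
  also have "\<dots> \<subseteq> span (?G (Suc k))"
    by (rule span_mono) force
  finally show ?thesis unfolding krylov_def .
qed

lemma orth_span:
  assumes "x \<in> span X" "\<And>y. y \<in> X \<Longrightarrow> a \<bullet> y = 0"
  shows "a \<bullet> x = 0"
  using orthogonal_to_span[OF assms(1), of a] assms(2) unfolding orthogonal_def by blast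

definition Inv where "Inv i \<longleftrightarrow> al i > 0 \<and> rr i \<noteq> 0
  \<and> vv i = (1 / al i) *\<^sub>R (Mi *v (A *v rr i)) \<and> tt i = (1 / al i) *\<^sub>R (C *v rr i)
  \<and> al i * al i = rr i \<bullet> (SS *v rr i)
  \<and> LL (rr i) = al i *\<^sub>R (gg i + al i *\<^sub>R qq i)
  \<and> (\<forall>j\<le>i. \<forall>l\<le>i. qq j \<bullet> (N *v qq l) = (if j = l then 1 else 0))
  \<and> (\<forall>j<i. rr j \<bullet> (SS *v rr i) = 0)
  \<and> (\<forall>j\<le>i. gg i \<bullet> (N *v qq j) = 0)
  \<and> rr i \<in> span (qq ` {..i})
  \<and> qq i \<in> kr (Suc i) \<and> rr i \<in> kr (Suc i) \<and> pp i \<in> kr (Suc i)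
  \<and> Ni *v (- b - SS *v pp i) = ze i *\<^sub>R gg i
  \<and> uu i = - (Mi *v (A *v pp i))"

lemma Inv0: "Inv 0"
proof -
  have b1: "b1 > 0" by (rule b1pos)
  have Nib: "Ni *v b \<noteq> 0" using bnz NNi(2)[of b] by auto
  have q0: "qq 0 = (1 / b1) *\<^sub>R (Ni *v b)" by (rule st0)
  have r0: "rr 0 = qq 0" by (rule st0)
  have rnz: "rr 0 \<noteq> 0" using Nib b1 by (simp add: r0 q0)
  have a0: "al 0 = sqrt (rr 0 \<bullet> (SS *v rr 0))"
    using st0(3) alpha_eq[of "rr 0"] by (simp add: r0)
  have pos: "rr 0 \<bullet> (SS *v rr 0) > 0" by (rule schur_pd[OF Mpd Cpsd Ainj rnz])
  have apos: "al 0 > 0" using pos a0 by simp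
  have aa: "al 0 * al 0 = rr 0 \<bullet> (SS *v rr 0)" using pos a0 by simp
  have v0: "vv 0 = (1 / al 0) *\<^sub>R (Mi *v (A *v rr 0))" using st0(4) r0 by simp
  have t0: "tt 0 = (1 / al 0) *\<^sub>R (C *v rr 0)" by (rule st0)
  have L0: "LL (rr 0) = al 0 *\<^sub>R (gg 0 + al 0 *\<^sub>R qq 0)" using gL[OF _ v0 t0] apos by simp
  have bb: "b1 * b1 = b \<bullet> (Ni *v b)"
    using pd_inv_pd[OF Npd bnz] by (simp add: Gnorm_def)
  have qn: "qq 0 \<bullet> (N *v qq 0) = 1"
  proof -
    have "qq 0 \<bullet> (N *v qq 0) = (1 / b1) * (1 / b1) * ((Ni *v b) \<bullet> b)"
      by (simp add: q0 mvs ins NNi)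
    also have "\<dots> = 1" using b1 bb pd_inv_pd[OF Npd bnz] by (simp add: inner_commute field_simps)
    finally show ?thesis .
  qed
  have orth: "\<forall>j\<le>0. \<forall>l\<le>0. qq j \<bullet> (N *v qq l) = (if j = l then 1 else 0)" using qn by simp
  have e0: "gg 0 \<bullet> (N *v qq 0) = 0"
  proof -
    have "gg 0 = (1 / al 0) *\<^sub>R LL (rr 0) - al 0 *\<^sub>R qq 0" using L0 apos by simp
    then have "gg 0 \<bullet> (N *v qq 0) = (1 / al 0) * (rr 0 \<bullet> (SS *v rr 0)) - al 0"
      by (simp add: ins LN qn r0)
    also have "\<dots> = 0" using aa apos by (simp add: field_simps)
    finally show ?thesis .
  qed
  have sp: "rr 0 \<in> span (qq ` {..0})" by (simp add: r0 span_base)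
  have k1: "qq 0 \<in> kr 1" using kr_gen[of 0 1] by (simp add: q0 span_mul krylov_def)
  have k2: "rr 0 \<in> kr 1" using k1 r0 by simp
  have k3: "pp 0 \<in> kr 1" using k2 by (simp add: st0(8) krylov_def span_mul span_neg)
  have res: "Ni *v (- b - SS *v pp 0) = ze 0 *\<^sub>R gg 0"
  proof -
    have "Ni *v (- b - SS *v pp 0) = - (Ni *v b) + (ze 0 / al 0) *\<^sub>R LL (rr 0)"
      by (simp add: st0(8) mvs)
    also have "\<dots> = - (b1 *\<^sub>R qq 0) + ze 0 *\<^sub>R (gg 0 + al 0 *\<^sub>R qq 0)"
      using b1 apos by (simp add: L0 q0)
    also have "\<dots> = ze 0 *\<^sub>R gg 0" using apos by (simp add: st0(6) algebra_simps)
    finally show ?thesis .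
  qed
  have u0: "uu 0 = - (Mi *v (A *v pp 0))"
    by (simp add: st0(7,8) v0 mvs)
  show ?thesis unfolding Inv_def
    using apos rnz v0 t0 aa L0 orth e0 sp k1 k2 k3 res u0 by simp
qed

lemma InvS:
  assumes iK: "i < K" and IH: "\<And>l. l \<le> i \<Longrightarrow> Inv l"
  shows "Inv (Suc i)"
proof -
  define n where "n = Suc i"
  have Ii: "Inv i" using IH by simp
  note Ii' = Ii[unfolded Inv_def]
  have apos_i: "al i > 0" and vi: "vv i = (1 / al i) *\<^sub>R (Mi *v (A *v rr i))"
    and Li: "LL (rr i) = al i *\<^sub>R (gg i + al i *\<^sub>R qq i)"
    and orth_i: "\<forall>j\<le>i. \<forall>l\<le>i. qq j \<bullet> (N *v qq l) = (if j = l then 1 else 0)"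
    and conj_i: "\<forall>j<i. rr j \<bullet> (SS *v rr i) = 0"
    and e_i: "\<forall>j\<le>i. gg i \<bullet> (N *v qq j) = 0"
    and sp_i: "rr i \<in> span (qq ` {..i})"
    and kq_i: "qq i \<in> kr (Suc i)" and kr_i: "rr i \<in> kr (Suc i)" and kp_i: "pp i \<in> kr (Suc i)"
    and res_i: "Ni *v (- b - SS *v pp i) = ze i *\<^sub>R gg i"
    and u_i: "uu i = - (Mi *v (A *v pp i))"
    and aa_i: "al i * al i = rr i \<bullet> (SS *v rr i)"
    using Ii' by blast+
  have benz: "be i \<noteq> 0" using bet iK by blast
  have gN0: "gg i \<bullet> (N *v gg i) \<ge> 0"
  proof (cases "gg i = 0")
    case True then show ?thesis by simp
  next
    case False then show ?thesis using Npd unfolding sym_pos_def_mat_def by (simp add: less_imp_le)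
  qed
  have bepos: "be i > 0" using benz gN0 by (simp add: be_def)
  have gN: "gg i \<bullet> (N *v gg i) = be i * be i" using gN0 by (simp add: be_def)
  have qn: "qq n = (1 / be i) *\<^sub>R gg i" unfolding n_def by (rule stS)
  have gq: "gg i = be i *\<^sub>R qq n" using benz by (simp add: qn)
  have qnn: "qq n \<bullet> (N *v qq n) = 1" using gN benz by (simp add: qn mvs ins)
  have qo: "qq n \<bullet> (N *v qq j) = 0" if "j \<le> i" for j
    using e_i that by (simp add: qn mvs ins)
  have qo': "qq j \<bullet> (N *v qq n) = 0" if "j \<le> i" for j
    using qo[OF that] Ncomm by metis
  have orth_n: "\<forall>j\<le>n. \<forall>l\<le>n. qq j \<bullet> (N *v qq l) = (if j = l then 1 else 0)"
  proof (intro allI impI)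
    fix j l assume "j \<le> n" "l \<le> n"
    then consider "j = n" "l = n" | "j = n" "l \<le> i" | "j \<le> i" "l = n" | "j \<le> i" "l \<le> i"
      unfolding n_def by linarith
    then show "qq j \<bullet> (N *v qq l) = (if j = l then 1 else 0)"
    proof cases
      case 1 then show ?thesis using qnn by simp
    next
      case 2 then show ?thesis using qo[of l] unfolding n_def by auto
    next
      case 3 then show ?thesis using qo'[of j] unfolding n_def by auto
    next
      case 4 then show ?thesis using orth_i by blast
    qed
  qed
  have Nqn_span: "(N *v qq n) \<bullet> x = 0" if "x \<in> span (qq ` {..i})" for x
  proof (rule orth_span[OF that])
    fix y assume "y \<in> qq ` {..i}"
    then obtain j where "j \<le> i" "y = qq j" by auto
    then show "(N *v qq n) \<bullet> y = 0" using qo' by (simp add: inner_commute)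
  qed
  define c where "c = be i / al i"
  have rn: "rr n = qq n - c *\<^sub>R rr i" unfolding n_def c_def by (rule stS)
  have qnri: "qq n \<bullet> (N *v rr i) = 0"
    using Nqn_span[OF sp_i] pd_sym[OF Npd, of "qq n" "rr i"] by simp
  have rqn: "qq n \<bullet> (N *v rr n) = 1" using qnn qnri by (simp add: rn mvs ins)
  have rnz: "rr n \<noteq> 0" using rqn by auto
  have w: "Mi *v (A *v qq n) - be i *\<^sub>R vv i = Mi *v (A *v rr n)"
    using apos_i by (simp add: rn vi mvs c_def)
  have an: "al n = sqrt (rr n \<bullet> (SS *v rr n))"
    using stS(3)[of i] alpha_eq[of "rr n"] w unfolding n_def by simp
  have pos: "rr n \<bullet> (SS *v rr n) > 0" by (rule schur_pd[OF Mpd Cpsd Ainj rnz])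
  have apos: "al n > 0" using pos an by simp
  have aa: "al n * al n = rr n \<bullet> (SS *v rr n)" using pos an by simp
  have vn: "vv n = (1 / al n) *\<^sub>R (Mi *v (A *v rr n))" using stS(4)[of i] w unfolding n_def by simp
  have tn: "tt n = (1 / al n) *\<^sub>R (C *v rr n)" unfolding n_def by (rule stS)
  have Ln: "LL (rr n) = al n *\<^sub>R (gg n + al n *\<^sub>R qq n)" using gL[OF _ vn tn] apos by simp
  have conj_n: "\<forall>j<n. rr j \<bullet> (SS *v rr n) = 0"
  proof (intro allI impI)
    fix j assume "j < n"
    then have ji: "j \<le> i" unfolding n_def by simp
    have Ij: "Inv j" using IH ji by simp
    have apos_j: "al j > 0" and Lj: "LL (rr j) = al j *\<^sub>R (gg j + al j *\<^sub>R qq j)"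
      using Ij unfolding Inv_def by blast+
    define X where "X = gg j + al j *\<^sub>R qq j"
    have XL: "X = (1 / al j) *\<^sub>R LL (rr j)" using Lj apos_j by (simp add: X_def)
    have "rr j \<bullet> (SS *v rr n) = (LL (rr j)) \<bullet> (N *v rr n)" by (simp add: LN)
    also have "\<dots> = al j * (X \<bullet> (N *v rr n))" using Lj by (simp add: X_def)
    also have "X \<bullet> (N *v rr n) = X \<bullet> (N *v qq n) - c * (X \<bullet> (N *v rr i))"
      by (simp add: rn mvs ins)
    also have "X \<bullet> (N *v rr i) = (1 / al j) * (rr j \<bullet> (SS *v rr i))"
      by (simp add: XL ins LN)
    also have "X \<bullet> (N *v qq n) = gg j \<bullet> (N *v qq n)"
      using qo'[OF ji] by (simp add: X_def ins)
    finally have eq: "rr j \<bullet> (SS *v rr n) = al j * (gg j \<bullet> (N *v qq n) - c * ((1 / al j) * (rr j \<bullet> (SS *v rr i))))" .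
    show "rr j \<bullet> (SS *v rr n) = 0"
    proof (cases "j = i")
      case True
      have g1: "gg i \<bullet> (N *v qq n) = be i" using qnn by (simp add: gq ins)
      have g2: "(1 / al i) * (rr i \<bullet> (SS *v rr i)) = al i" using apos_i by (simp add: aa_i[symmetric])
      have "c * ((1 / al i) * (rr i \<bullet> (SS *v rr i))) = be i" using g2 apos_i by (simp add: c_def)
      then show ?thesis using eq g1 True by simp
    next
      case False
      then have ji': "j < i" using ji by simp
      have "gg j = be j *\<^sub>R qq (Suc j)" using bet[of j] ji' iK by (simp add: stS(1))
      moreover have "qq (Suc j) \<bullet> (N *v qq n) = 0" using qo' ji' by simp
      ultimately have "gg j \<bullet> (N *v qq n) = 0" by simp
      then show ?thesis using eq conj_i ji' by simp
    qed
  qed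
  have rSr: "rr n \<bullet> (SS *v rr j) = 0" if "j \<le> i" for j
    using conj_n that Scomm unfolding n_def by (metis less_Suc_eq_le)
  have rSq: "rr n \<bullet> (SS *v qq j) = 0" if "j \<le> i" for j
  proof (cases j)
    case 0 then show ?thesis using rSr[of 0] by (simp add: st0(2)[symmetric])
  next
    case (Suc j')
    have "qq j = rr j + (be j' / al j') *\<^sub>R rr j'" using stS(2)[of j'] Suc by simp
    then show ?thesis using rSr[of j] rSr[of j'] that Suc by (simp add: mvs ins)
  qed
  have rSqn: "rr n \<bullet> (SS *v qq n) = al n * al n"
  proof -
    have "qq n = rr n + c *\<^sub>R rr i" using rn by simp
    then show ?thesis using aa rSr[of i] by (simp add: mvs ins)
  qed
  have ggn: "gg n = (1 / al n) *\<^sub>R LL (rr n) - al n *\<^sub>R qq n" using Ln apos by simp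
  have e_n: "\<forall>j\<le>n. gg n \<bullet> (N *v qq j) = 0"
  proof (intro allI impI)
    fix j assume "j \<le> n"
    have "gg n \<bullet> (N *v qq j) = (1 / al n) * (rr n \<bullet> (SS *v qq j)) - al n * (qq n \<bullet> (N *v qq j))"
      by (simp add: ggn ins LN)
    moreover have "qq n \<bullet> (N *v qq j) = (if j = n then 1 else 0)" using orth_n \<open>j \<le> n\<close> by simp
    ultimately show "gg n \<bullet> (N *v qq j) = 0"
      using rSq[of j] rSqn apos \<open>j \<le> n\<close> unfolding n_def
      by (cases "j = Suc i") (simp_all add: field_simps)
  qed
  have sp_n: "rr n \<in> span (qq ` {..n})"
  proof -
    have "span (qq ` {..i}) \<subseteq> span (qq ` {..n})" unfolding n_def by (rule span_mono) auto
    then have "rr i \<in> span (qq ` {..n})" using sp_i by blast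
    moreover have "qq n \<in> span (qq ` {..n})" by (rule span_base) auto
    ultimately show ?thesis by (simp add: rn span_diff span_mul)
  qed
  have kq_n: "qq n \<in> kr (Suc n)"
  proof -
    have "gg i = (1 / al i) *\<^sub>R LL (rr i) - al i *\<^sub>R qq i" using Li apos_i by simp
    moreover have "LL (rr i) \<in> kr (Suc n)" using kr_L[OF kr_i] unfolding n_def by simp
    moreover have "qq i \<in> kr (Suc n)" using kr_mono[of "Suc i" "Suc n"] kq_i unfolding n_def by auto
    ultimately show ?thesis unfolding qn krylov_def by (simp add: span_diff span_mul)
  qed
  have kr_n: "rr n \<in> kr (Suc n)"
  proof -
    have "rr i \<in> kr (Suc n)" using kr_mono[of "Suc i" "Suc n"] kr_i unfolding n_def by auto
    then show ?thesis using kq_n unfolding rn krylov_def by (simp add: span_diff span_mul)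
  qed
  have kp_n: "pp n \<in> kr (Suc n)"
  proof -
    have "pp i \<in> kr (Suc n)" using kr_mono[of "Suc i" "Suc n"] kp_i unfolding n_def by auto
    then show ?thesis using kr_n unfolding n_def stS(8) krylov_def by (simp add: span_diff span_mul)
  qed
  have zn: "ze n = - (be i / al n) * ze i" unfolding n_def by (rule stS)
  have res_n: "Ni *v (- b - SS *v pp n) = ze n *\<^sub>R gg n"
  proof -
    have "Ni *v (- b - SS *v pp n) = Ni *v (- b - SS *v pp i) + (ze n / al n) *\<^sub>R LL (rr n)"
      unfolding n_def stS(8) by (simp add: mvs algebra_simps)
    also have "\<dots> = ze i *\<^sub>R (be i *\<^sub>R qq n) + ze n *\<^sub>R (gg n + al n *\<^sub>R qq n)"
      using apos by (simp add: res_i Ln gq[symmetric])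
    also have "\<dots> = ze n *\<^sub>R gg n" using apos by (simp add: zn algebra_simps)
    finally show ?thesis .
  qed
  have u_n: "uu n = - (Mi *v (A *v pp n))"
    unfolding n_def stS(7) stS(8) using vn u_i unfolding n_def by (simp add: mvs)
  show ?thesis unfolding n_def[symmetric] Inv_def
    using apos rnz vn tn aa Ln orth_n conj_n e_n sp_n kq_n kr_n kp_n res_n u_n by blast
qed

lemma Inv_all: "i \<le> K \<Longrightarrow> Inv i"
proof (induction i rule: less_induct)
  case (less i)
  show ?case
  proof (cases i)
    case 0 then show ?thesis using Inv0 by simp
  next
    case (Suc j)
    then show ?thesis using less InvS[of j] by simp
  qed
qed

lemma LLr:
  assumes "n \<le> K" "l \<le> n"
  shows "LL (rr l) \<in> span (insert (gg n) (qq ` {..n}))"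
proof -
  let ?T = "span (insert (gg n) (qq ` {..n}))"
  have Il: "Inv l" using Inv_all assms by simp
  then have Ll: "LL (rr l) = al l *\<^sub>R (gg l + al l *\<^sub>R qq l)" unfolding Inv_def by blast
  have q: "qq l \<in> ?T" using assms by (intro span_base) auto
  have g: "gg l \<in> ?T"
  proof (cases "l = n")
    case True then show ?thesis by (simp add: span_base)
  next
    case False
    then have "l < K" "Suc l \<le> n" using assms by auto
    then have "gg l = be l *\<^sub>R qq (Suc l)" using bet[of l] by (simp add: stS(1))
    moreover have "qq (Suc l) \<in> ?T" using \<open>Suc l \<le> n\<close> by (intro span_base) auto
    ultimately show ?thesis by (simp add: span_mul)
  qed
  show ?thesis using q g by (simp add: Ll span_mul span_add)
qed

lemma LLq:
  assumes "n \<le> K" "l \<le> n"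
  shows "LL (qq l) \<in> span (insert (gg n) (qq ` {..n}))"
proof (cases l)
  case 0 then show ?thesis using LLr[OF assms] by (simp add: st0(2)[symmetric])
next
  case (Suc l')
  have "qq l = rr l + (be l' / al l') *\<^sub>R rr l'" using stS(2)[of l'] Suc by simp
  then show ?thesis using LLr[OF assms] LLr[of n l'] assms Suc
    by (simp add: mvs span_add span_mul)
qed

lemma LLspan:
  assumes "n \<le> K" "x \<in> span (qq ` {..n})"
  shows "LL x \<in> span (insert (gg n) (qq ` {..n}))"
proof -
  have "LL x \<in> LL ` span (qq ` {..n})" using assms by blast
  also have "\<dots> = span (LL ` qq ` {..n})" by (simp add: span_linear_image[OF LL_lin])
  also have "\<dots> \<subseteq> span (insert (gg n) (qq ` {..n}))"
    by (rule span_minimal[OF _ subspace_span]) (use LLq[OF assms(1)] in auto)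
  finally show ?thesis .
qed

lemma kr_sub: "n \<le> K \<Longrightarrow> kr (Suc n) \<subseteq> span (qq ` {..n})"
proof (induction n)
  case 0
  have "Ni *v b = b1 *\<^sub>R qq 0" using b1pos by (simp add: st0(1))
  then have "Ni *v b \<in> span (qq ` {..0})" by (simp add: span_mul span_base)
  then show ?case unfolding krylov_def by (intro span_minimal[OF _ subspace_span]) auto
next
  case (Suc n)
  have nK: "n < K" using Suc.prems by simp
  have IH: "kr (Suc n) \<subseteq> span (qq ` {..n})" using Suc nK by simp
  have mono: "span (qq ` {..n}) \<subseteq> span (qq ` {..Suc n})" by (rule span_mono) auto
  have gsub: "span (insert (gg n) (qq ` {..n})) \<subseteq> span (qq ` {..Suc n})"
  proof (rule span_minimal[OF _ subspace_span])
    have "gg n = be n *\<^sub>R qq (Suc n)" using bet[OF nK] by (simp add: stS(1))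
    then have "gg n \<in> span (qq ` {..Suc n})" by (simp add: span_mul span_base)
    then show "insert (gg n) (qq ` {..n}) \<subseteq> span (qq ` {..Suc n})"
      by (auto intro: span_base)
  qed
  have gen: "(LL ^^ j) (Ni *v b) \<in> span (qq ` {..Suc n})" if "j < Suc (Suc n)" for j
  proof (cases "j < Suc n")
    case True
    then show ?thesis using kr_gen[OF True] IH mono by blast
  next
    case False
    then have j: "j = Suc n" using that by simp
    have "(LL ^^ n) (Ni *v b) \<in> span (qq ` {..n})" using kr_gen[of n "Suc n"] IH by blast
    then have "LL ((LL ^^ n) (Ni *v b)) \<in> span (insert (gg n) (qq ` {..n}))"
      using LLspan nK by simp
    then show ?thesis using gsub j by auto
  qed
  show ?case unfolding krylov_def
    by (rule span_minimal[OF _ subspace_span]) (use gen in auto)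
qed

lemma final:
  "pp K \<in> kr (Suc K)
   \<and> (\<forall>x \<in> kr (Suc K). (- b - SS *v pp K) \<bullet> x = 0)
   \<and> (\<forall>p \<in> kr (Suc K). (\<forall>x \<in> kr (Suc K). (- b - SS *v p) \<bullet> x = 0) \<longrightarrow> p = pp K)
   \<and> uu K = - (Mi *v (A *v pp K))"
proof -
  have I: "Inv K" using Inv_all by simp
  have kp: "pp K \<in> kr (Suc K)" and res: "Ni *v (- b - SS *v pp K) = ze K *\<^sub>R gg K"
    and u: "uu K = - (Mi *v (A *v pp K))" and e: "\<forall>j\<le>K. gg K \<bullet> (N *v qq j) = 0"
    using I unfolding Inv_def by blast+
  have res': "- b - SS *v pp K = ze K *\<^sub>R (N *v gg K)"
    using arg_cong[OF res, of "\<lambda>y. N *v y"] by (simp add: NNi mvs)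
  have orth: "(- b - SS *v pp K) \<bullet> x = 0" if "x \<in> kr (Suc K)" for x
  proof -
    have "x \<in> span (qq ` {..K})" using kr_sub that by blast
    then have "(N *v gg K) \<bullet> x = 0"
    proof (rule orth_span)
      fix y assume "y \<in> qq ` {..K}"
      then obtain j where "j \<le> K" "y = qq j" by auto
      then show "(N *v gg K) \<bullet> y = 0" using e pd_sym[OF Npd, of "gg K" "qq j"] by simp
    qed
    then show ?thesis by (simp add: res')
  qed
  have uniq: "p = pp K" if p: "p \<in> kr (Suc K)" and h: "\<forall>x \<in> kr (Suc K). (- b - SS *v p) \<bullet> x = 0" for p
  proof (rule ccontr)
    assume ne: "p \<noteq> pp K"
    define d where "d = p - pp K"
    have dnz: "d \<noteq> 0" using ne by (simp add: d_def)
    have dk: "d \<in> kr (Suc K)" using p kp unfolding d_def krylov_def by (simp add: span_diff)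
    have "(- b - SS *v pp K) \<bullet> d - (- b - SS *v p) \<bullet> d = 0" using orth[OF dk] h dk by simp
    then have "d \<bullet> (SS *v d) = 0" by (simp add: d_def mvs ins inner_commute)
    then show False using schur_pd[OF Mpd Cpsd Ainj dnz] by simp
  qed
  show ?thesis using kp orth uniq u by blast
qed

end

theorem theorem3p1:
  fixes M :: "real^'m^'m" and A :: "real^'n^'m" and C :: "real^'n^'n"
    and N :: "real^'n^'n" and b :: "real^'n" and k :: nat
  assumes "sym_pos_def_mat M"
    and "CARD('n) \<le> CARD('m)"
    and "rank A = CARD('n)"
    and "sym_pos_semidef_mat C"
    and "b \<noteq> 0"
    and "sym_pos_def_mat N"
    and "craig_defined M A C N b k"
  shows "craig_p M A C N b k \<in> krylov (schur M A C) N b k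
    \<and> (\<forall>x \<in> krylov (schur M A C) N b k.
          (- b - schur M A C *v craig_p M A C N b k) \<bullet> x = 0)
    \<and> (\<forall>p \<in> krylov (schur M A C) N b k.
          (\<forall>x \<in> krylov (schur M A C) N b k. (- b - schur M A C *v p) \<bullet> x = 0)
          \<longrightarrow> p = craig_p M A C N b k)
    \<and> craig_u M A C N b k = - (matrix_inv M *v (A *v craig_p M A C N b k))"
proof -
  have k1: "1 \<le> k" and bet0: "\<forall>i. i + 1 < k \<longrightarrow> craig_beta_next A N (craig M A C N b i) \<noteq> 0"
    using assms(7) unfolding craig_defined_def by blast+
  have bet': "craig_beta_next A N (craig M A C N b j) \<noteq> 0" if "j < k - 1" for j
    using bet0 that by auto
  have Ainj: "inj ((*v) A)" using assms(3) full_rank_injective by blast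
  have F: "cp (craig M A C N b (k - 1)) \<in> krylov (schur M A C) N b (Suc (k - 1))
   \<and> (\<forall>x \<in> krylov (schur M A C) N b (Suc (k - 1)). (- b - schur M A C *v cp (craig M A C N b (k - 1))) \<bullet> x = 0)
   \<and> (\<forall>p \<in> krylov (schur M A C) N b (Suc (k - 1)). (\<forall>x \<in> krylov (schur M A C) N b (Suc (k - 1)). (- b - schur M A C *v p) \<bullet> x = 0) \<longrightarrow> p = cp (craig M A C N b (k - 1)))
   \<and> cu (craig M A C N b (k - 1)) = - (matrix_inv M *v (A *v cp (craig M A C N b (k - 1))))"
    by (rule final[OF assms(1) Ainj assms(4) assms(5) assms(6) bet'])
  have "Suc (k - 1) = k" using k1 by simp
  then show ?thesis using F unfolding craig_p_def craig_u_def by simp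
qed

end
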